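(* Let $P\in\mathbb{R}^N$ and $\delta\in(0,1)$. For every $x\in\mathbb{R}^N$ there are open sets $U_x$, $W_x$ with $x\in\overline{U_x}\cap\overline{W_x}$ such that $S_1(x,y)+P\cdot(x-y)<1+|P|\,r_V(\delta,1)$ for all $y\in U_x$, and $S_1(y,x)+P\cdot(y-x)<1+|P|\,r_V(\delta,1)$ for all $y\in W_x$. Moreover each of the families $\{U_x\}_{x\in\mathbb{R}^N}$ and $\{W_x\}_{x\in\mathbb{R}^N}$ is an open covering of $\mathbb{R}^N$.
   Context: $V:\mathbb{R}^N\to\mathbb{R}^N$ is $\mathbb{Z}^N$-periodic and Lipschitz continuous with Lipschitz constant $L_V$; $r_V(\delta,1)=(1-\delta)/L_V$ (with $r_V=+\infty$ if $L_V=0$). $H(x,p)=|p|+p\cdot V(x)$, $Z(x)=\{p\mid H(x,p)\le1\}$, $\sigma(x,q)=\sup\{p\cdot q\mid p\in Z(x)\}\in[0,+\infty]$. For a Lipschitz curve $\xi:[0,T]\to\mathbb{R}^N$, $\ell_V(\xi)=\int_0^T\sigma(\xi(t),\dot\xi(t))\,dt$, and $S_1(x,y)=\inf\{\ell_V(\xi)\mid \xi$ Lipschitz curve joining $x$ to $y\}$. *)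

theory Defs
  imports "HOL-Analysis.Analysis"
begin

definition Ham :: "(real^'n \<Rightarrow> real^'n) \<Rightarrow> real^'n \<Rightarrow> real^'n \<Rightarrow> real" where
  "Ham V x p = norm p + p \<bullet> V x"

definition Zset :: "(real^'n \<Rightarrow> real^'n) \<Rightarrow> real^'n \<Rightarrow> (real^'n) set" where
  "Zset V x = {p. Ham V x p \<le> 1}"

text \<open>Support function sigma(x,q) = sup {p . q | p in Z(x)}, valued in [0,+infinity]
  (it is nonnegative since 0 belongs to Z(x)).\<close>
definition sigma_V :: "(real^'n \<Rightarrow> real^'n) \<Rightarrow> real^'n \<Rightarrow> real^'n \<Rightarrow> ennreal" where
  "sigma_V V x q = (SUP p \<in> Zset V x. ennreal (p \<bullet> q))"

definition ell_V :: "(real^'n \<Rightarrow> real^'n) \<Rightarrow> (real \<Rightarrow> real^'n) \<Rightarrow> real \<Rightarrow> ennreal" where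
  "ell_V V \<xi> T = (\<integral>\<^sup>+ t \<in> {0..T}. sigma_V V (\<xi> t) (vector_derivative \<xi> (at t)) \<partial>lborel)"

definition lip_curve :: "(real \<Rightarrow> real^'n) \<Rightarrow> real \<Rightarrow> real^'n \<Rightarrow> real^'n \<Rightarrow> bool" where
  "lip_curve \<xi> T x y \<longleftrightarrow> 0 \<le> T \<and> (\<exists>L. L-lipschitz_on {0..T} \<xi>) \<and> \<xi> 0 = x \<and> \<xi> T = y"

definition S1 :: "(real^'n \<Rightarrow> real^'n) \<Rightarrow> real^'n \<Rightarrow> real^'n \<Rightarrow> ennreal" where
  "S1 V x y = (INF (\<xi>, T) \<in> {(\<xi>, T). lip_curve \<xi> T x y}. ell_V V \<xi> T)"

text \<open>r_V(delta,1) = (1 - delta)/L_V, and +infinity if L_V = 0.\<close>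
definition rV :: "real \<Rightarrow> real \<Rightarrow> ereal" where
  "rV LV \<delta> = (if LV = 0 then \<infinity> else ereal ((1 - \<delta>) / LV))"

definition Zn_periodic :: "(real^'n \<Rightarrow> 'b) \<Rightarrow> bool" where
  "Zn_periodic f \<longleftrightarrow> (\<forall>x z. (\<forall>i. z $ i \<in> \<int>) \<longrightarrow> f (x + z) = f x)"

end

theory Submission
  imports Defs
begin

lemma sigma_bound:
  fixes q v :: "real^'n"
  assumes "0 \<le> l" "norm (q - l *\<^sub>R V z) \<le> l"
  shows "sigma_V V z q \<le> ennreal l"
  unfolding sigma_V_def
proof (rule SUP_least)
  fix p assume "p \<in> Zset V z"
  hence H: "norm p + p \<bullet> V z \<le> 1" by (simp add: Zset_def Ham_def)
  have "p \<bullet> q = l * (p \<bullet> V z) + p \<bullet> (q - l *\<^sub>R V z)"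
    by (simp add: inner_diff_right)
  also have "p \<bullet> (q - l *\<^sub>R V z) \<le> norm p * l"
    using Cauchy_Schwarz_ineq2[of p "q - l *\<^sub>R V z"] assms(2)
    by (meson norm_ge_zero mult_left_mono order_trans abs_le_D1 norm_cauchy_schwarz)
  hence "l * (p \<bullet> V z) + p \<bullet> (q - l *\<^sub>R V z) \<le> l * (norm p + p \<bullet> V z)"
    by (simp add: algebra_simps)
  also have "\<dots> \<le> l" using H assms(1) by (simp add: mult_left_le)
  finally show "ennreal (p \<bullet> q) \<le> ennreal l" by (rule ennreal_leI)
qed

lemma S1_seg:
  fixes a b :: "real^'n"
  assumes "0 \<le> l" "\<And>t. t \<in> {0..1} \<Longrightarrow> norm (b - a - l *\<^sub>R V (a + t *\<^sub>R (b - a))) \<le> l"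
  shows "S1 V a b \<le> ennreal l"
proof -
  define \<xi> where "\<xi> = (\<lambda>t::real. a + t *\<^sub>R (b - a))"
  have der: "vector_derivative \<xi> (at t) = b - a" for t
    unfolding \<xi>_def
    by (rule vector_derivative_at) (auto intro!: derivative_eq_intros)
  have lip: "(norm (b - a))-lipschitz_on {0..1} \<xi>"
    unfolding lipschitz_on_def \<xi>_def
    by (auto simp: dist_norm scaleR_diff_left[symmetric] mult.commute)
  have lc: "lip_curve \<xi> 1 a b" unfolding lip_curve_def using lip by (auto simp: \<xi>_def)
  have "S1 V a b \<le> ell_V V \<xi> 1"
    unfolding S1_def using lc by (intro INF_lower2[of "(\<xi>, 1)"]) auto
  also have "\<dots> \<le> (\<integral>\<^sup>+ t. ennreal l * indicator {0..1::real} t \<partial>lborel)"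
  proof -
    have pw: "sigma_V V (\<xi> t) (vector_derivative \<xi> (at t)) * indicator {0..1} t
          \<le> ennreal l * indicator {0..1} t" for t
    proof (cases "t \<in> {0..1}")
      case True
      have "sigma_V V (\<xi> t) (b - a) \<le> ennreal l"
        using assms(1) assms(2)[OF True] by (intro sigma_bound) (auto simp: \<xi>_def)
      thus ?thesis using True der by simp
    qed simp
    show ?thesis unfolding ell_V_def using pw by (intro nn_integral_mono) blast
  qed
  also have "\<dots> = ennreal l" by (simp add: nn_integral_cmult_indicator)
  finally show ?thesis .
qed


definition lam0 :: "real^'n \<Rightarrow> real \<Rightarrow> (real^'n \<Rightarrow> real^'n) \<Rightarrow> real^'n \<Rightarrow> real" where
  "lam0 P LV V x = 1 / (2 * (1 + (norm P + LV) * (norm (V x) + 1)))"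

lemma rV_nonneg: "0 \<le> LV \<Longrightarrow> \<delta> < 1 \<Longrightarrow> 0 \<le> rV LV \<delta>"
  by (auto simp: rV_def)

lemma est:
  fixes a b z P :: "real^'n"
  assumes lip: "LV-lipschitz_on UNIV V" and d: "\<delta> < 1"
    and z: "z = a \<or> z = b" and l: "0 < l"
    and near: "norm (b - a - l *\<^sub>R V z) < l / 2"
    and small: "l * (1 + (norm P + LV) * (norm (V z) + 1)) \<le> 1/2"
  shows "enn2ereal (S1 V a b) + ereal (P \<bullet> (a - b)) < 1 + ereal (norm P) * rV LV \<delta>"
proof -
  have LV: "0 \<le> LV" using lip by (simp add: lipschitz_on_def)
  have nb: "norm (b - a) \<le> l * (norm (V z) + 1)"
  proof -
    have "norm (b - a) \<le> norm (b - a - l *\<^sub>R V z) + norm (l *\<^sub>R V z)"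
      by (metis diff_add_cancel norm_triangle_ineq)
    also have "\<dots> \<le> l / 2 + l * norm (V z)" using near l by simp
    finally show ?thesis using l by (simp add: algebra_simps)
  qed
  have s1: "l * LV * (norm (V z) + 1) \<le> 1/2"
  proof -
    have "l * LV * (norm (V z) + 1) \<le> l * (1 + (norm P + LV) * (norm (V z) + 1))"
      using l LV by (simp add: algebra_simps)
    thus ?thesis using small by linarith
  qed
  have s2: "l + norm P * (l * (norm (V z) + 1)) \<le> 1/2"
  proof -
    have "l + norm P * (l * (norm (V z) + 1)) \<le> l * (1 + (norm P + LV) * (norm (V z) + 1))"
      using l LV by (simp add: algebra_simps)
    thus ?thesis using small by linarith
  qed
  have seg: "norm (b - a - l *\<^sub>R V (a + t *\<^sub>R (b - a))) \<le> l" if t: "t \<in> {0..1}" for t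
  proof -
    have "norm (a + t *\<^sub>R (b - a) - z) \<le> norm (b - a)"
    proof (cases "z = a")
      case True
      then show ?thesis using t by (auto intro: mult_left_le_one_le)
    next
      case False
      hence "z = b" using z by auto
      hence "a + t *\<^sub>R (b - a) - z = (1 - t) *\<^sub>R (a - b)" by (simp add: algebra_simps)
      moreover have "(1 - t) * norm (a - b) \<le> 1 * norm (a - b)" using t by (intro mult_right_mono) auto
      ultimately show ?thesis using t by (simp add: norm_minus_commute)
    qed
    hence "norm (V (a + t *\<^sub>R (b - a)) - V z) \<le> LV * norm (b - a)"
      using lip unfolding lipschitz_on_def dist_norm
      by (meson LV UNIV_I mult_left_mono order_trans)
    hence "norm (l *\<^sub>R (V (a + t *\<^sub>R (b - a)) - V z)) \<le> l * (LV * norm (b - a))"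
      using l by (simp add: mult_left_mono)
    also have "\<dots> \<le> l * (LV * (l * (norm (V z) + 1)))"
      using l LV nb by (simp add: mult_left_mono)
    also have "\<dots> = l * (l * LV * (norm (V z) + 1))" by (simp add: algebra_simps)
    also have "\<dots> \<le> l * (1/2)" using s1 l by (intro mult_left_mono) auto
    finally have A: "norm (l *\<^sub>R (V (a + t *\<^sub>R (b - a)) - V z)) \<le> l / 2" by simp
    have "b - a - l *\<^sub>R V (a + t *\<^sub>R (b - a)) = (b - a - l *\<^sub>R V z) - l *\<^sub>R (V (a + t *\<^sub>R (b - a)) - V z)"
      by (simp add: algebra_simps)
    hence "norm (b - a - l *\<^sub>R V (a + t *\<^sub>R (b - a))) \<le> norm (b - a - l *\<^sub>R V z) + norm (l *\<^sub>R (V (a + t *\<^sub>R (b - a)) - V z))"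
      by (metis norm_triangle_ineq4)
    thus ?thesis using A near by linarith
  qed
  have S: "S1 V a b \<le> ennreal l" using l seg by (intro S1_seg) auto
  have S': "enn2ereal (S1 V a b) \<le> ereal l"
    using S l by (metis enn2ereal_ennreal less_eq_ennreal.rep_eq less_imp_le)
  have Pb: "P \<bullet> (a - b) \<le> norm P * (l * (norm (V z) + 1))"
  proof -
    have "P \<bullet> (a - b) \<le> norm P * norm (b - a)"
      by (metis norm_cauchy_schwarz norm_minus_commute)
    also have "\<dots> \<le> norm P * (l * (norm (V z) + 1))" using nb by (simp add: mult_left_mono)
    finally show ?thesis .
  qed
  have "enn2ereal (S1 V a b) + ereal (P \<bullet> (a - b)) \<le> ereal l + ereal (P \<bullet> (a - b))"
    using S' by (rule add_right_mono)
  also have "\<dots> = ereal (l + P \<bullet> (a - b))" by simp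
  also have "\<dots> < 1" using s2 Pb by simp
  also have "1 \<le> 1 + ereal (norm P) * rV LV \<delta>"
  proof -
    have "0 \<le> ereal (norm P) * rV LV \<delta>"
      using rV_nonneg[OF LV d] by (intro ereal_0_le_mult) auto
    thus ?thesis by (metis add.right_neutral add_left_mono)
  qed
  finally show ?thesis .
qed


lemma clos:
  fixes x v :: "real^'n"
  assumes "0 < m"
  shows "x \<in> closure (\<Union>l\<in>{0<..<m}. ball (x + l *\<^sub>R v) (l/2))"
  unfolding closure_approachable
proof (intro allI impI)
  fix e :: real assume e: "0 < e"
  define l where "l = min (m/2) (e / (2 * (norm v + 1)))"
  have "0 < e / (2 * (norm v + 1))" using e by (intro divide_pos_pos) (auto intro: add_nonneg_pos)
  hence l: "0 < l" "l < m" using assms e by (auto simp: l_def)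
  have "l * norm v \<le> e / (2 * (norm v + 1)) * norm v"
    by (intro mult_right_mono) (auto simp: l_def)
  also have "\<dots> < e"
  proof -
    have pos: "0 < 2 * (norm v + 1)" by (simp add: add_nonneg_pos)
    have "e * norm v < e * (2 * (norm v + 1))" using e by (intro mult_strict_left_mono) (auto intro: add_nonneg_pos)
    thus ?thesis using pos by (simp add: pos_divide_less_eq)
  qed
  finally have "dist (x + l *\<^sub>R v) x < e" using l by (simp add: dist_norm)
  moreover have "x + l *\<^sub>R v \<in> (\<Union>l\<in>{0<..<m}. ball (x + l *\<^sub>R v) (l/2))"
    using l by (intro UN_I[of l]) auto
  ultimately show "\<exists>y\<in>(\<Union>l\<in>{0<..<m}. ball (x + l *\<^sub>R v) (l/2)). dist y x < e" by blast
qed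

lemma cover:
  fixes y P :: "real^'n" and s :: real
  assumes lip: "LV-lipschitz_on UNIV V" and s: "\<bar>s\<bar> = 1"
  shows "\<exists>x l. 0 < l \<and> l < lam0 P LV V x \<and> dist (x + l *\<^sub>R (s *\<^sub>R V x)) y < l/2"
proof -
  have LV: "0 \<le> LV" using lip by (simp add: lipschitz_on_def)
  define C where "C = 1 + (norm P + LV) * (norm (V y) + 2)"
  have C1: "1 \<le> C" using LV by (simp add: C_def)
  define l where "l = 1 / (4 * C)"
  have l: "0 < l" using C1 by (simp add: l_def)
  have lC: "l * C = 1/4" using C1 by (simp add: l_def)
  define x where "x = y - (l * s) *\<^sub>R V y"
  have nx: "norm (x - y) = l * norm (V y)" using s l by (simp add: x_def abs_mult)
  have dV: "norm (V x - V y) \<le> LV * (l * norm (V y))"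
    using lip nx unfolding lipschitz_on_def dist_norm by (metis UNIV_I)
  have "LV * norm (V y) \<le> C"
  proof -
    have "LV * norm (V y) \<le> (norm P + LV) * (norm (V y) + 2)"
      using LV by (intro mult_mono) auto
    thus ?thesis by (simp add: C_def)
  qed
  hence "l * (LV * norm (V y)) \<le> l * C" using l by (intro mult_left_mono) auto
  hence q: "LV * (l * norm (V y)) \<le> 1/4" using lC by (simp add: algebra_simps)
  hence dV': "norm (V x - V y) \<le> 1/4" using dV by linarith
  have "norm (V x) \<le> norm (V y) + 1/4" using dV' norm_triangle_ineq2[of "V x" "V y"] by linarith
  hence "1 + (norm P + LV) * (norm (V x) + 1) \<le> C"
    unfolding C_def using LV by (intro add_left_mono mult_left_mono) auto
  moreover have "0 < 1 + (norm P + LV) * (norm (V x) + 1)" using LV by (simp add: add_pos_nonneg)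
  ultimately have "1 / (2 * C) \<le> lam0 P LV V x" unfolding lam0_def
    using C1 by (intro divide_left_mono) (auto intro: add_pos_nonneg)
  moreover have "l < 1 / (2 * C)" using C1 by (simp add: l_def field_simps)
  ultimately have "l < lam0 P LV V x" by linarith
  moreover have "dist (x + l *\<^sub>R (s *\<^sub>R V x)) y < l/2"
  proof -
    have "x + l *\<^sub>R (s *\<^sub>R V x) - y = (l * s) *\<^sub>R (V x - V y)"
      by (simp add: x_def algebra_simps)
    hence "dist (x + l *\<^sub>R (s *\<^sub>R V x)) y = l * norm (V x - V y)"
      using s l by (simp add: dist_norm abs_mult)
    also have "\<dots> \<le> l * (1/4)" using dV' l by (intro mult_left_mono) auto
    also have "\<dots> < l / 2" using l by simp
    finally show ?thesis .
  qed
  ultimately show ?thesis using l by blast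
qed


theorem lemma5p3:
  fixes V :: "real^'n \<Rightarrow> real^'n" and LV :: real and P :: "real^'n" and \<delta> :: real
  assumes "Zn_periodic V"
    and "LV-lipschitz_on UNIV V"
    and "0 < \<delta>" and "\<delta> < 1"
  shows "\<exists>U W :: real^'n \<Rightarrow> (real^'n) set.
    (\<forall>x. open (U x) \<and> open (W x) \<and> x \<in> closure (U x) \<inter> closure (W x)
       \<and> (\<forall>y \<in> U x. enn2ereal (S1 V x y) + ereal (P \<bullet> (x - y)) < 1 + ereal (norm P) * rV LV \<delta>)
       \<and> (\<forall>y \<in> W x. enn2ereal (S1 V y x) + ereal (P \<bullet> (y - x)) < 1 + ereal (norm P) * rV LV \<delta>))
    \<and> (\<Union>x. U x) = UNIV \<and> (\<Union>x. W x) = UNIV"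
proof -
  note lip = assms(2)
  have LV: "0 \<le> LV" using lip by (simp add: lipschitz_on_def)
  define U where "U x = (\<Union>l\<in>{0<..<lam0 P LV V x}. ball (x + l *\<^sub>R (1 *\<^sub>R V x)) (l/2))" for x
  define W where "W x = (\<Union>l\<in>{0<..<lam0 P LV V x}. ball (x + l *\<^sub>R ((-1) *\<^sub>R V x)) (l/2))" for x
  have pos: "0 < lam0 P LV V x" for x
    using LV by (simp add: lam0_def add_pos_nonneg)
  have small: "l * (1 + (norm P + LV) * (norm (V x) + 1)) \<le> 1/2"
    if "0 < l" "l < lam0 P LV V x" for l x
  proof -
    have D: "0 < 1 + (norm P + LV) * (norm (V x) + 1)" using LV by (simp add: add_pos_nonneg)
    have "l < 1 / (2 * (1 + (norm P + LV) * (norm (V x) + 1)))" using that by (simp add: lam0_def)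
    thus ?thesis using D by (simp add: field_simps)
  qed
  have "\<forall>x. open (U x) \<and> open (W x) \<and> x \<in> closure (U x) \<inter> closure (W x)
       \<and> (\<forall>y \<in> U x. enn2ereal (S1 V x y) + ereal (P \<bullet> (x - y)) < 1 + ereal (norm P) * rV LV \<delta>)
       \<and> (\<forall>y \<in> W x. enn2ereal (S1 V y x) + ereal (P \<bullet> (y - x)) < 1 + ereal (norm P) * rV LV \<delta>)"
  proof (intro allI conjI ballI)
    fix x
    show "open (U x)" "open (W x)" unfolding U_def W_def by auto
    show "x \<in> closure (U x) \<inter> closure (W x)" unfolding U_def W_def
      using clos[OF pos] by blast
  next
    fix x y assume "y \<in> U x"
    then obtain l where l: "0 < l" "l < lam0 P LV V x" and d: "dist (x + l *\<^sub>R V x) y < l/2"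
      unfolding U_def by auto
    have "norm (y - x - l *\<^sub>R V x) < l / 2" using d
      by (simp add: dist_norm norm_minus_commute algebra_simps)
    thus "enn2ereal (S1 V x y) + ereal (P \<bullet> (x - y)) < 1 + ereal (norm P) * rV LV \<delta>"
      using est[OF lip assms(4), of x x y l P] l small by auto
  next
    fix x y assume "y \<in> W x"
    then obtain l where l: "0 < l" "l < lam0 P LV V x" and d: "dist (x + l *\<^sub>R ((-1) *\<^sub>R V x)) y < l/2"
      unfolding W_def by auto
    have "norm (x - y - l *\<^sub>R V x) < l / 2" using d
      by (simp add: dist_norm algebra_simps)
    thus "enn2ereal (S1 V y x) + ereal (P \<bullet> (y - x)) < 1 + ereal (norm P) * rV LV \<delta>"
      using est[OF lip assms(4), of x y x l P] l small by auto
  qed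
  moreover have "(\<Union>x. U x) = UNIV"
  proof (safe)
    fix y
    obtain x l where "0 < l" "l < lam0 P LV V x" "dist (x + l *\<^sub>R (1 *\<^sub>R V x)) y < l/2"
      using cover[OF lip, where s=1 and y=y and P=P] by auto
    hence "y \<in> U x" unfolding U_def by auto
    thus "y \<in> (\<Union>x. U x)" by blast
  qed auto
  moreover have "(\<Union>x. W x) = UNIV"
  proof (safe)
    fix y
    obtain x l where "0 < l" "l < lam0 P LV V x" "dist (x + l *\<^sub>R ((-1) *\<^sub>R V x)) y < l/2"
      using cover[OF lip, where s="-1" and y=y and P=P] by auto
    hence "y \<in> W x" unfolding W_def by auto
    thus "y \<in> (\<Union>x. W x)" by blast
  qed auto
  ultimately show ?thesis by blast
qed

end
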